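(* If $\Gamma_G$ is population monotonic, then $G$ has no induced subgraph isomorphic to the butterfly graph.
   Context: $G=(V,E;w)$ is a finite simple graph with edge weights $w:E\to\mathbb{R}$, $w_e>0$ for all $e\in E$. The matching game on $G$ is the cooperative game $\Gamma_G=(N,\gamma)$ with player set $N=V$ and, for $S\subseteq N$, $\gamma(S)$ equal to the maximum weight of a matching in the induced subgraph $G[S]$ (so $\gamma(\emptyset)=0$). A population monotonic allocation scheme (PMAS) is a family $(\boldsymbol{x}_S)_{\emptyset\neq S\subseteq N}$ with $\boldsymbol{x}_S=(x_{S,i})_{i\in S}\in\mathbb{R}^S$ such that (efficiency) $\sum_{i\in S}x_{S,i}=\gamma(S)$ for every nonempty $S\subseteq N$, and (monotonicity) $x_{S,i}\le x_{T,i}$ whenever $\emptyset\ne S\subseteq T\subseteq N$ and $i\in S$. $\Gamma_G$ is called population monotonic if it admits a PMAS. The butterfly graph is the graph on vertices $\{1,2,3,4,5\}$ with edge set exactly $\{12,13,23,34,35,45\}$ (two triangles sharing exactly the vertex $3$). *)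

theory Defs
  imports Complex_Main
begin

definition simple_graph :: "'a set \<Rightarrow> 'a set set \<Rightarrow> bool" where
  "simple_graph V E \<longleftrightarrow> finite V \<and>
     (\<forall>e\<in>E. e \<subseteq> V \<and> card e = 2)"

definition matchings_in :: "'a set set \<Rightarrow> 'a set \<Rightarrow> 'a set set set" where
  "matchings_in E S = {M. M \<subseteq> E \<and> (\<forall>e\<in>M. e \<subseteq> S) \<and>
       (\<forall>e\<in>M. \<forall>f\<in>M. e \<noteq> f \<longrightarrow> e \<inter> f = {})}"

definition matching_game :: "'a set set \<Rightarrow> ('a set \<Rightarrow> real) \<Rightarrow> 'a set \<Rightarrow> real" where
  "matching_game E w S = Max ((\<lambda>M. \<Sum>e\<in>M. w e) ` matchings_in E S)"

text \<open>Population monotonic allocation scheme: x S i is the payoff of i in coalition S.\<close>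
definition is_PMAS :: "'a set \<Rightarrow> ('a set \<Rightarrow> real) \<Rightarrow> ('a set \<Rightarrow> 'a \<Rightarrow> real) \<Rightarrow> bool" where
  "is_PMAS N v x \<longleftrightarrow>
     (\<forall>S. S \<subseteq> N \<and> S \<noteq> {} \<longrightarrow> (\<Sum>i\<in>S. x S i) = v S) \<and>
     (\<forall>S T i. S \<noteq> {} \<and> S \<subseteq> T \<and> T \<subseteq> N \<and> i \<in> S \<longrightarrow> x S i \<le> x T i)"

definition population_monotonic :: "'a set \<Rightarrow> ('a set \<Rightarrow> real) \<Rightarrow> bool" where
  "population_monotonic N v \<longleftrightarrow> (\<exists>x. is_PMAS N v x)"

definition butterfly_edges :: "nat set set" where
  "butterfly_edges = {{1,2},{1,3},{2,3},{3,4},{3,5},{4,5}}"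

definition has_induced_butterfly :: "'a set \<Rightarrow> 'a set set \<Rightarrow> bool" where
  "has_induced_butterfly V E \<longleftrightarrow>
     (\<exists>f. f ` {1..5::nat} \<subseteq> V \<and> inj_on f {1..5} \<and>
        (\<forall>i\<in>{1..5}. \<forall>j\<in>{1..5}. i \<noteq> j \<longrightarrow>
           ({f i, f j} \<in> E \<longleftrightarrow> {i, j} \<in> butterfly_edges)))"

end

theory Submission
  imports Defs
begin

lemma fin_match:
  assumes "simple_graph V E"
  shows "finite (matchings_in E S)"
proof -
  have "finite E" using assms unfolding simple_graph_def
    by (meson Pow_iff finite_Pow_iff finite_subset subsetI)
  moreover have "matchings_in E S \<subseteq> Pow E" unfolding matchings_in_def by auto
  ultimately show ?thesis by (meson finite_Pow_iff finite_subset)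
qed

lemma empty_match: "{} \<in> matchings_in E S"
  unfolding matchings_in_def by auto

lemma gamma_ge:
  assumes "simple_graph V E" "e \<in> E" "e \<subseteq> S"
  shows "w e \<le> matching_game E w S"
proof -
  have "{e} \<in> matchings_in E S" using assms unfolding matchings_in_def by auto
  hence "(\<Sum>e\<in>{e}. w e) \<in> (\<lambda>M. \<Sum>e\<in>M. w e) ` matchings_in E S" by blast
  thus ?thesis unfolding matching_game_def using fin_match[OF assms(1)]
    by (metis Max_ge finite_imageI sum.insert_if sum.empty add.right_neutral finite.emptyI empty_iff)
qed

lemma gamma_le:
  assumes sg: "simple_graph V E" and fS: "finite S" and cS: "card S \<le> 3" and B: "0 \<le> B"
    and H: "\<And>e. e \<in> E \<Longrightarrow> e \<subseteq> S \<Longrightarrow> w e \<le> B"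
  shows "matching_game E w S \<le> B"
  unfolding matching_game_def
proof (subst Max_le_iff)
  show "finite ((\<lambda>M. \<Sum>e\<in>M. w e) ` matchings_in E S)" using fin_match[OF sg] by simp
  show "(\<lambda>M. \<Sum>e\<in>M. w e) ` matchings_in E S \<noteq> {}" using empty_match by blast
  show "\<forall>a\<in>(\<lambda>M. \<Sum>e\<in>M. w e) ` matchings_in E S. a \<le> B"
  proof
    fix a assume "a \<in> (\<lambda>M. \<Sum>e\<in>M. w e) ` matchings_in E S"
    then obtain M where M: "M \<in> matchings_in E S" and a: "a = (\<Sum>e\<in>M. w e)" by blast
    show "a \<le> B"
    proof (cases "M = {}")
      case True thus ?thesis using a B by simp
    next
      case False
      then obtain e where e: "e \<in> M" by blast
      have "M = {e}"
      proof (rule ccontr)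
        assume "M \<noteq> {e}"
        then obtain g where g: "g \<in> M" "g \<noteq> e" using e by blast
        have ge: "e \<inter> g = {}" "e \<subseteq> S" "g \<subseteq> S" "e \<in> E" "g \<in> E"
          using M e g unfolding matchings_in_def by blast+
        have c2: "card e = 2" "card g = 2" using ge sg unfolding simple_graph_def by auto
        have fe: "finite e" "finite g" using c2 card.infinite by fastforce+
        have "card (e \<union> g) = 4" using card_Un_disjoint[OF fe ge(1)] c2 by simp
        moreover have "card (e \<union> g) \<le> card S" using ge fS by (simp add: card_mono)
        ultimately show False using cS by simp
      qed
      thus ?thesis using a H M e unfolding matchings_in_def by auto
    qed
  qed
qed

lemma two_sub3:
  assumes "card e = 2" "e \<subseteq> {p,q,r}"
  shows "e = {p,q} \<or> e = {p,r} \<or> e = {q,r}"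
proof -
  obtain s t where st: "e = {s,t}" "s \<noteq> t" using assms(1) by (auto simp: card_2_iff)
  have "s = p \<or> s = q \<or> s = r" "t = p \<or> t = q \<or> t = r" using assms(2) st by auto
  then show ?thesis using st(2) unfolding st(1)
    by (elim disjE) (simp_all add: insert_commute)
qed

lemma path_bound:
  assumes sg: "simple_graph V E" and wp: "\<forall>e\<in>E. w e > 0"
    and P: "is_PMAS V (matching_game E w) x"
    and V: "p \<in> V" "c \<in> V" "q \<in> V" and d: "p \<noteq> c" "c \<noteq> q" "p \<noteq> q"
    and E: "{c,p} \<in> E" "{c,q} \<in> E" "{p,q} \<notin> E"
  shows "w {c,p} + w {c,q} \<le> max (w {c,p}) (w {c,q}) + min (x {c,p} c) (x {c,q} c)"
proof -
  let ?S = "{p,c,q}"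
  have eff: "\<And>S. S \<subseteq> V \<Longrightarrow> S \<noteq> {} \<Longrightarrow> (\<Sum>i\<in>S. x S i) = matching_game E w S"
    using P unfolding is_PMAS_def by blast
  have mono: "\<And>S T i. S \<noteq> {} \<Longrightarrow> S \<subseteq> T \<Longrightarrow> T \<subseteq> V \<Longrightarrow> i \<in> S \<Longrightarrow> x S i \<le> x T i"
    using P unfolding is_PMAS_def by blast
  have e1: "x {c,p} c + x {c,p} p \<ge> w {c,p}"
    using eff[of "{c,p}"] gamma_ge[OF sg E(1), of "{c,p}" w] V d by simp
  have e2: "x {c,q} c + x {c,q} q \<ge> w {c,q}"
    using eff[of "{c,q}"] gamma_ge[OF sg E(2), of "{c,q}" w] V d by simp
  have up: "matching_game E w ?S \<le> max (w {c,p}) (w {c,q})"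
  proof (rule gamma_le[OF sg])
    show "finite ?S" by simp
    show "card ?S \<le> 3" using d by simp
    show "0 \<le> max (w {c,p}) (w {c,q})" using wp E by (simp add: le_max_iff_disj less_imp_le)
    fix e assume "e \<in> E" "e \<subseteq> ?S"
    hence "card e = 2" using sg unfolding simple_graph_def by auto
    hence "e = {p,c} \<or> e = {p,q} \<or> e = {c,q}" using two_sub3[OF _ \<open>e \<subseteq> ?S\<close>] by blast
    thus "w e \<le> max (w {c,p}) (w {c,q})" using \<open>e \<in> E\<close> E insert_commute[of p c] by (elim disjE) simp_all
  qed
  have s3: "x ?S p + x ?S c + x ?S q = matching_game E w ?S"
    using eff[of ?S] V d by simp
  have m1: "x {c,p} p \<le> x ?S p" "x {c,p} c \<le> x ?S c"
    using mono[of "{c,p}" ?S] V by auto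
  have m2: "x {c,q} q \<le> x ?S q" "x {c,q} c \<le> x ?S c"
    using mono[of "{c,q}" ?S] V by auto
  show ?thesis
  proof (cases "x {c,p} c \<le> x {c,q} c")
    case True
    hence "min (x {c,p} c) (x {c,q} c) = x {c,p} c" by simp
    thus ?thesis using e1 e2 up s3 m1 m2 by linarith
  next
    case False
    hence "min (x {c,p} c) (x {c,q} c) = x {c,q} c" by simp
    thus ?thesis using e1 e2 up s3 m1 m2 by linarith
  qed
qed

lemma tri_bound:
  assumes sg: "simple_graph V E" and wp: "\<forall>e\<in>E. w e > 0"
    and P: "is_PMAS V (matching_game E w) x"
    and V: "p \<in> V" "c \<in> V" "q \<in> V" and d: "p \<noteq> c" "c \<noteq> q" "p \<noteq> q"
    and E: "{c,p} \<in> E" "{c,q} \<in> E" "{p,q} \<in> E"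
  shows "w {p,q} + x {c,p} c \<le> max (w {p,q}) (max (w {c,p}) (w {c,q}))"
proof -
  let ?S = "{p,c,q}"
  have eff: "\<And>S. S \<subseteq> V \<Longrightarrow> S \<noteq> {} \<Longrightarrow> (\<Sum>i\<in>S. x S i) = matching_game E w S"
    using P unfolding is_PMAS_def by blast
  have mono: "\<And>S T i. S \<noteq> {} \<Longrightarrow> S \<subseteq> T \<Longrightarrow> T \<subseteq> V \<Longrightarrow> i \<in> S \<Longrightarrow> x S i \<le> x T i"
    using P unfolding is_PMAS_def by blast
  have e1: "x {p,q} p + x {p,q} q \<ge> w {p,q}"
    using eff[of "{p,q}"] gamma_ge[OF sg E(3), of "{p,q}" w] V d by simp
  have up: "matching_game E w ?S \<le> max (w {p,q}) (max (w {c,p}) (w {c,q}))"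
  proof (rule gamma_le[OF sg])
    show "finite ?S" by simp
    show "card ?S \<le> 3" using d by simp
    show "0 \<le> max (w {p,q}) (max (w {c,p}) (w {c,q}))" using wp E by (simp add: le_max_iff_disj less_imp_le)
    fix e assume "e \<in> E" "e \<subseteq> ?S"
    hence "card e = 2" using sg unfolding simple_graph_def by auto
    hence "e = {p,c} \<or> e = {p,q} \<or> e = {c,q}" using two_sub3[OF _ \<open>e \<subseteq> ?S\<close>] by blast
    thus "w e \<le> max (w {p,q}) (max (w {c,p}) (w {c,q}))" using insert_commute[of p c] by (elim disjE) simp_all
  qed
  have s3: "x ?S p + x ?S c + x ?S q = matching_game E w ?S"
    using eff[of ?S] V d by simp
  have m1: "x {p,q} p \<le> x ?S p" "x {p,q} q \<le> x ?S q"
    using mono[of "{p,q}" ?S] V by auto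
  have m2: "x {c,p} c \<le> x ?S c"
    using mono[of "{c,p}" ?S] V by auto
  show ?thesis using e1 up s3 m1 m2 by linarith
qed

lemma arA: fixes a b c u1 :: real assumes "a>0" "b>0" "c>0" "c \<le> b"
 "a + u1 \<le> max a (max b c)" shows "u1 < b"
  using assms by (cases "a \<le> b"; simp add: max_def)

lemma arB: fixes b d u1 u4 :: real assumes "u1 < b" "u4 < d" "b + d \<le> max b d + min u1 u4" shows False
  using assms by (cases "b \<le> d"; cases "u1 \<le> u4"; simp add: max_def min_def)

lemma final_arith:
  fixes a b c d e f u1 u2 u4 u5 :: real
  assumes pos: "a > 0" "b > 0" "c > 0" "d > 0" "e > 0" "f > 0"
    and T1: "a + u1 \<le> max a (max b c)" and T1': "a + u2 \<le> max a (max b c)"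
    and T2: "f + u4 \<le> max f (max d e)" and T2': "f + u5 \<le> max f (max d e)"
    and P14: "b + d \<le> max b d + min u1 u4"
    and P15: "b + e \<le> max b e + min u1 u5"
    and P24: "c + d \<le> max c d + min u2 u4"
    and P25: "c + e \<le> max c e + min u2 u5"
  shows False
proof -
  have h1: "c \<le> b \<Longrightarrow> u1 < b" using arA[OF pos(1,2,3) _ T1] by blast
  have T1'': "a + u2 \<le> max a (max c b)" using T1' by (simp add: max.commute)
  have h2: "b \<le> c \<Longrightarrow> u2 < c" using arA[OF pos(1,3,2) _ T1''] by blast
  have h4: "e \<le> d \<Longrightarrow> u4 < d" using arA[OF pos(6,4,5) _ T2] by blast
  have T2'': "f + u5 \<le> max f (max e d)" using T2' by (simp add: max.commute)
  have h5: "d \<le> e \<Longrightarrow> u5 < e" using arA[OF pos(6,5,4) _ T2''] by blast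
  show False
  proof (cases "c \<le> b")
    case True
    show False
    proof (cases "e \<le> d")
      case True thus False using arB[OF h1 h4 P14] \<open>c \<le> b\<close> by blast
    next
      case False thus False using arB[OF h1 h5 P15] \<open>c \<le> b\<close> by linarith
    qed
  next
    case cb: False
    show False
    proof (cases "e \<le> d")
      case True thus False using arB[OF h2 h4 P24] cb by linarith
    next
      case False thus False using arB[OF h2 h5 P25] cb by linarith
    qed
  qed
qed

theorem mainTheorem12:
  fixes V :: "'a set" and E :: "'a set set" and w :: "'a set \<Rightarrow> real"
  assumes "simple_graph V E"
    and "\<forall>e\<in>E. w e > 0"
    and "population_monotonic V (matching_game E w)"
  shows "\<not> has_induced_butterfly V E"
proof
  assume "has_induced_butterfly V E"
  then obtain f where fV: "f ` {1..5::nat} \<subseteq> V" and inj: "inj_on f {1..5}"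
    and ed: "\<forall>i\<in>{1..5}. \<forall>j\<in>{1..5}. i \<noteq> j \<longrightarrow> ({f i, f j} \<in> E \<longleftrightarrow> {i, j} \<in> butterfly_edges)"
    unfolding has_induced_butterfly_def by blast
  obtain x where P: "is_PMAS V (matching_game E w) x"
    using assms(3) unfolding population_monotonic_def by blast
  have inV: "f 1 \<in> V" "f 2 \<in> V" "f 3 \<in> V" "f 4 \<in> V" "f 5 \<in> V" using fV by auto
  have dist: "f i \<noteq> f j" if "i \<in> {1..5}" "j \<in> {1..5}" "i \<noteq> j" for i j
    using inj that by (meson inj_on_contraD)
  have edge: "{f i, f j} \<in> E \<longleftrightarrow> {i, j} \<in> butterfly_edges" if "i \<in> {1..5}" "j \<in> {1..5}" "i \<noteq> j" for i j
    using ed that by blast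
  have E12: "{f 1, f 2} \<in> E" and E31: "{f 3, f 1} \<in> E" and E32: "{f 3, f 2} \<in> E"
    and E34: "{f 3, f 4} \<in> E" and E35: "{f 3, f 5} \<in> E" and E45: "{f 4, f 5} \<in> E"
    and N14: "{f 1, f 4} \<notin> E" and N15: "{f 1, f 5} \<notin> E"
    and N24: "{f 2, f 4} \<notin> E" and N25: "{f 2, f 5} \<notin> E"
    by (simp_all add: edge butterfly_edges_def doubleton_eq_iff)
  have d: "f 1 \<noteq> f 2" "f 1 \<noteq> f 3" "f 1 \<noteq> f 4" "f 1 \<noteq> f 5" "f 2 \<noteq> f 3" "f 2 \<noteq> f 4"
    "f 2 \<noteq> f 5" "f 3 \<noteq> f 4" "f 3 \<noteq> f 5" "f 4 \<noteq> f 5" by (simp_all add: dist)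
  have E21: "{f 2, f 1} \<in> E" using E12 by (metis insert_commute)
  have E54: "{f 5, f 4} \<in> E" using E45 by (metis insert_commute)
  note sg = assms(1) and wp = assms(2)
  have T1: "w {f 1, f 2} + x {f 3, f 1} (f 3) \<le> max (w {f 1, f 2}) (max (w {f 3, f 1}) (w {f 3, f 2}))"
    using tri_bound[OF sg wp P inV(1) inV(3) inV(2)] d E12 E31 E32 by simp
  have T1': "w {f 1, f 2} + x {f 3, f 2} (f 3) \<le> max (w {f 1, f 2}) (max (w {f 3, f 1}) (w {f 3, f 2}))"
  proof -
    have "w {f 2, f 1} + x {f 3, f 2} (f 3) \<le> max (w {f 2, f 1}) (max (w {f 3, f 2}) (w {f 3, f 1}))"
      using tri_bound[OF sg wp P inV(2) inV(3) inV(1)] d E21 E31 E32 by simp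
    moreover have eqw: "w {f 2, f 1} = w {f 1, f 2}" by (metis insert_commute)
    moreover have mx: "max (w {f 1, f 2}) (max (w {f 3, f 2}) (w {f 3, f 1})) = max (w {f 1, f 2}) (max (w {f 3, f 1}) (w {f 3, f 2}))"
      by (rule arg_cong[where f="max _"], rule max.commute)
    ultimately show ?thesis by (simp only:)
  qed
  have T2: "w {f 4, f 5} + x {f 3, f 4} (f 3) \<le> max (w {f 4, f 5}) (max (w {f 3, f 4}) (w {f 3, f 5}))"
    using tri_bound[OF sg wp P inV(4) inV(3) inV(5)] d E34 E35 E45 by simp
  have T2': "w {f 4, f 5} + x {f 3, f 5} (f 3) \<le> max (w {f 4, f 5}) (max (w {f 3, f 4}) (w {f 3, f 5}))"
  proof -
    have "w {f 5, f 4} + x {f 3, f 5} (f 3) \<le> max (w {f 5, f 4}) (max (w {f 3, f 5}) (w {f 3, f 4}))"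
      using tri_bound[OF sg wp P inV(5) inV(3) inV(4)] d E34 E35 E54 by simp
    moreover have eqw: "w {f 5, f 4} = w {f 4, f 5}" by (metis insert_commute)
    moreover have mx: "max (w {f 4, f 5}) (max (w {f 3, f 5}) (w {f 3, f 4})) = max (w {f 4, f 5}) (max (w {f 3, f 4}) (w {f 3, f 5}))"
      by (rule arg_cong[where f="max _"], rule max.commute)
    ultimately show ?thesis by (simp only:)
  qed
  have P14: "w {f 3, f 1} + w {f 3, f 4} \<le> max (w {f 3, f 1}) (w {f 3, f 4}) + min (x {f 3, f 1} (f 3)) (x {f 3, f 4} (f 3))"
    using path_bound[OF sg wp P inV(1) inV(3) inV(4)] d E31 E34 N14 by simp
  have P15: "w {f 3, f 1} + w {f 3, f 5} \<le> max (w {f 3, f 1}) (w {f 3, f 5}) + min (x {f 3, f 1} (f 3)) (x {f 3, f 5} (f 3))"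
    using path_bound[OF sg wp P inV(1) inV(3) inV(5)] d E31 E35 N15 by simp
  have P24: "w {f 3, f 2} + w {f 3, f 4} \<le> max (w {f 3, f 2}) (w {f 3, f 4}) + min (x {f 3, f 2} (f 3)) (x {f 3, f 4} (f 3))"
    using path_bound[OF sg wp P inV(2) inV(3) inV(4)] d E32 E34 N24 by simp
  have P25: "w {f 3, f 2} + w {f 3, f 5} \<le> max (w {f 3, f 2}) (w {f 3, f 5}) + min (x {f 3, f 2} (f 3)) (x {f 3, f 5} (f 3))"
    using path_bound[OF sg wp P inV(2) inV(3) inV(5)] d E32 E35 N25 by simp
  have pos: "w {f 1, f 2} > 0" "w {f 3, f 1} > 0" "w {f 3, f 2} > 0" "w {f 3, f 4} > 0"
    "w {f 3, f 5} > 0" "w {f 4, f 5} > 0" using wp E12 E31 E32 E34 E35 E45 by auto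
  show False by (rule final_arith[OF pos(1,2,3,4,5,6) T1 T1' T2 T2' P14 P15 P24 P25])
qed

end
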